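(* Define $\tau_{k} = \{T \mid T \subseteq \Omega, |T| = k \in \mathbb{N}\}$ and let $\mathcal{B}_m$ denote any set of binary strings (information resources) of length $m$ or less. Define $q := \mathbb{E}_{T, F}\left[\phi(T,F)\right] = \mathbb{E}_{T,F}[P_\phi(\omega \in T \mid F)] = \Pr(\omega \in T; \mathcal{A})$, the expected decomposable probability of success under the joint distribution on $T \in \tau_{k}$ and $F \in \mathcal{B}_m$ for any fixed algorithm $\mathcal{A}$. Then \[ q \leq \frac{I(T; F) + D(P_T \| \mathcal{U}_T) + 1}{I_{\Omega}}, \] where $I_{\Omega} = -\log k/|\Omega|$, $D(P_T \| \mathcal{U}_T)$ is the Kullback-Leibler divergence between the marginal distribution on $T$ and the uniform distribution on $T$, and $I(T; F)$ is the mutual information. Alternatively, \[ \Pr(\omega \in T; \mathcal{A}) \leq \frac{H(\mathcal{U}_T) - H(T \mid F) + 1}{I_{\Omega}}, \] where $H(\mathcal{U}_T) = \log\binom{|\Omega|}{k}$.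
   Context: Algorithmic search framework: finite discrete search space $\Omega$, random target set $T\subseteq\Omega$ with indicator vector $\mathbf{t}$, random information resource $F$, and a fixed search algorithm $\mathcal{A}$ whose sampled element $\omega$ (or $X$) depends on $T$ only through $F$. A probability-of-success metric $\phi$ is decomposable if there exists a probability vector $\mathbf{P}_{\phi,f}$ over $\Omega$, not a function of the target, with $\phi(t,f)=\mathbf{t}^{\top}\mathbf{P}_{\phi,f}=P_\phi(X\in t\mid f)$. *)

theory Defs
  imports "HOL-Probability.Probability_Mass_Function"
begin

text \<open>Discrete information-theoretic quantities (in bits) for a joint
distribution J of a target set T and an information resource F.
Sums range over supports, i.e. the convention 0 log 0 = 0.\<close>

definition marg_T :: "('a \<times> 'b) pmf \<Rightarrow> 'a pmf" where
  "marg_T J = map_pmf fst J"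

definition marg_F :: "('a \<times> 'b) pmf \<Rightarrow> 'b pmf" where
  "marg_F J = map_pmf snd J"

definition mutual_info :: "('a \<times> 'b) pmf \<Rightarrow> real" where
  "mutual_info J = (\<Sum>(t,f)\<in>set_pmf J.
      pmf J (t,f) * log 2 (pmf J (t,f) / (pmf (marg_T J) t * pmf (marg_F J) f)))"

definition cond_entropy :: "('a \<times> 'b) pmf \<Rightarrow> real" where
  "cond_entropy J = - (\<Sum>(t,f)\<in>set_pmf J.
      pmf J (t,f) * log 2 (pmf J (t,f) / pmf (marg_F J) f))"

definition kl_div :: "'a pmf \<Rightarrow> 'a pmf \<Rightarrow> real" where
  "kl_div P Q = (\<Sum>x\<in>set_pmf P. pmf P x * log 2 (pmf P x / pmf Q x))"

definition tau :: "'a set \<Rightarrow> nat \<Rightarrow> 'a set set" where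
  "tau \<Omega> k = {T. T \<subseteq> \<Omega> \<and> card T = k}"

definition info_Omega :: "'a set \<Rightarrow> nat \<Rightarrow> real" where
  "info_Omega \<Omega> k = - log 2 (real k / real (card \<Omega>))"

end

theory Submission
  imports Defs "HOL-Analysis.Analysis"
begin

lemma powr_le_lin:
  fixes a x :: real assumes "a \<ge> 1" "0 \<le> x" "x \<le> 1"
  shows "a powr x \<le> 1 + x * (a - 1)"
proof -
  have "exp ((1 - x) *\<^sub>R 0 + x *\<^sub>R ln a) \<le> (1 - x) * exp 0 + x * exp (ln a)"
    by (rule convex_onD[OF exp_convex]) (use assms in auto)
  moreover have "a powr x = exp ((1 - x) *\<^sub>R 0 + x *\<^sub>R ln a)"
    using assms by (simp add: powr_def)
  ultimately show ?thesis using assms by (simp add: algebra_simps)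
qed

lemma card_contain:
  assumes "finite \<Omega>" "\<omega> \<in> \<Omega>" "0 < k"
  shows "card {t\<in>tau \<Omega> k. \<omega> \<in> t} \<le> (card \<Omega> - 1) choose (k - 1)"
proof -
  have "card {t\<in>tau \<Omega> k. \<omega> \<in> t} \<le> card {s. s \<subseteq> \<Omega> - {\<omega>} \<and> card s = k - 1}"
  proof (rule card_inj_on_le[where f="\<lambda>t. t - {\<omega>}"])
    show "inj_on (\<lambda>t. t - {\<omega>}) {t \<in> tau \<Omega> k. \<omega> \<in> t}"
      by (rule inj_onI) (metis (mono_tags, lifting) insert_Diff mem_Collect_eq)
    show "(\<lambda>t. t - {\<omega>}) ` {t \<in> tau \<Omega> k. \<omega> \<in> t} \<subseteq> {s. s \<subseteq> \<Omega> - {\<omega>} \<and> card s = k - 1}"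
      using assms by (auto simp: tau_def intro!: card_Diff_singleton dest: finite_subset)
    show "finite {s. s \<subseteq> \<Omega> - {\<omega>} \<and> card s = k - 1}" using assms by auto
  qed
  also have "\<dots> = (card \<Omega> - 1) choose (k - 1)"
    using assms by (simp add: n_subsets)
  finally show ?thesis .
qed


lemma finite_tau: "finite \<Omega> \<Longrightarrow> finite (tau \<Omega> k)"
  unfolding tau_def by (rule finite_subset[of _ "Pow \<Omega>"]) auto

lemma card_tau: "finite \<Omega> \<Longrightarrow> card (tau \<Omega> k) = card \<Omega> choose k"
  unfolding tau_def by (rule n_subsets)

lemma sum_meas_tau:
  assumes "finite \<Omega>" "0 < k" "set_pmf p \<subseteq> \<Omega>"
  shows "(\<Sum>t\<in>tau \<Omega> k. measure_pmf.prob p t) \<le> real ((card \<Omega> - 1) choose (k - 1))"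
proof -
  let ?c = "real ((card \<Omega> - 1) choose (k - 1))"
  have fin: "finite (tau \<Omega> k)" using assms finite_tau by blast
  have "(\<Sum>t\<in>tau \<Omega> k. measure_pmf.prob p t) = (\<Sum>t\<in>tau \<Omega> k. \<Sum>\<omega>\<in>{\<omega>\<in>\<Omega>. \<omega> \<in> t}. pmf p \<omega>)"
  proof (rule sum.cong[OF refl])
    fix t assume t: "t \<in> tau \<Omega> k"
    then have "t \<subseteq> \<Omega>" by (simp add: tau_def)
    then have "{\<omega>\<in>\<Omega>. \<omega> \<in> t} = t" by auto
    moreover have "finite t" using \<open>t \<subseteq> \<Omega>\<close> assms(1) finite_subset by blast
    ultimately show "measure_pmf.prob p t = (\<Sum>\<omega>\<in>{\<omega>\<in>\<Omega>. \<omega> \<in> t}. pmf p \<omega>)"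
      by (simp add: measure_measure_pmf_finite)
  qed
  also have "\<dots> = (\<Sum>\<omega>\<in>\<Omega>. \<Sum>t\<in>{t\<in>tau \<Omega> k. \<omega> \<in> t}. pmf p \<omega>)"
    by (rule sum.swap_restrict[OF fin assms(1)])
  also have "\<dots> = (\<Sum>\<omega>\<in>\<Omega>. pmf p \<omega> * real (card {t\<in>tau \<Omega> k. \<omega> \<in> t}))"
    by (simp add: mult.commute)
  also have "\<dots> \<le> (\<Sum>\<omega>\<in>\<Omega>. pmf p \<omega> * ?c)"
    by (intro sum_mono mult_left_mono) (use card_contain[OF assms(1) _ assms(2)] in auto)
  also have "\<dots> = ?c * (\<Sum>\<omega>\<in>\<Omega>. pmf p \<omega>)"
    by (simp add: sum_distrib_right mult.commute)
  also have "(\<Sum>\<omega>\<in>\<Omega>. pmf p \<omega>) = 1"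
    by (rule sum_pmf_eq_1[OF assms(1) assms(3)])
  finally show ?thesis by simp
qed

lemma sum_powr_tau:
  assumes "finite \<Omega>" "0 < k" "k < card \<Omega>" "set_pmf p \<subseteq> \<Omega>"
  shows "(\<Sum>t\<in>tau \<Omega> k. (real (card \<Omega>) / real k) powr measure_pmf.prob p t)
         \<le> 2 * real (card \<Omega> choose k)"
proof -
  let ?a = "real (card \<Omega>) / real k"
  let ?c = "real ((card \<Omega> - 1) choose (k - 1))"
  have a1: "?a \<ge> 1" using assms by (simp add: field_simps)
  have "(\<Sum>t\<in>tau \<Omega> k. ?a powr measure_pmf.prob p t) \<le> (\<Sum>t\<in>tau \<Omega> k. 1 + measure_pmf.prob p t * (?a - 1))"
    by (intro sum_mono powr_le_lin a1) auto
  also have "\<dots> = real (card (tau \<Omega> k)) + (\<Sum>t\<in>tau \<Omega> k. measure_pmf.prob p t) * (?a - 1)"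
    by (simp add: sum.distrib sum_distrib_right)
  also have "\<dots> \<le> real (card (tau \<Omega> k)) + ?c * (?a - 1)"
    using sum_meas_tau[OF assms(1,2,4)] a1 by (intro add_left_mono mult_right_mono) auto
  also have "?c * (?a - 1) \<le> ?c * ?a" by (intro mult_left_mono) auto
  also have "?c * ?a = real (card \<Omega> choose k)"
  proof -
    have "real k * real (card \<Omega> choose k) = real (card \<Omega>) * ?c"
      using times_binomial_minus1_eq[OF assms(2), of "card \<Omega>"] by (metis of_nat_mult)
    then show ?thesis using assms(2) by (simp add: field_simps)
  qed
  finally show ?thesis using card_tau[OF assms(1)] by simp
qed


lemma log2_le: "0 < (y::real) \<Longrightarrow> log 2 y \<le> (y - 1) / ln 2"
  unfolding log_def by (intro divide_right_mono ln_le_minus_one) auto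

lemma fin_B: "\<forall>f\<in>B. length f \<le> m \<Longrightarrow> finite (B :: bool list set)"
  by (rule finite_subset[OF _ finite_lists_length_le[of "UNIV::bool set" m]]) auto

lemma expect_fst:
  assumes "finite (set_pmf J)"
  shows "(\<Sum>x\<in>set_pmf J. pmf J x * (g (fst x) :: real))
       = (\<Sum>t\<in>set_pmf (map_pmf fst J). pmf (map_pmf fst J) t * g t)"
proof -
  have "(\<Sum>x\<in>set_pmf J. pmf J x * g (fst x)) = measure_pmf.expectation J (\<lambda>x. g (fst x))"
    by (subst integral_measure_pmf_real[OF assms]) (auto simp: mult.commute set_pmf_iff)
  also have "\<dots> = measure_pmf.expectation (map_pmf fst J) g" by simp
  also have "\<dots> = (\<Sum>t\<in>set_pmf (map_pmf fst J). pmf (map_pmf fst J) t * g t)"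
    using assms
    by (subst integral_measure_pmf_real[where A="set_pmf (map_pmf fst J)"]) (auto simp: mult.commute set_pmf_iff)
  finally show ?thesis .
qed

theorem theorem5:
  fixes \<Omega> :: "'a set" and k m :: nat and B :: "bool list set"
    and J :: "('a set \<times> bool list) pmf"
    and P :: "bool list \<Rightarrow> 'a pmf"
  assumes "finite \<Omega>"
    and "0 < k" and "k < card \<Omega>"
    and "\<forall>f\<in>B. length f \<le> m"
    and "set_pmf J \<subseteq> tau \<Omega> k \<times> B"
    and "\<forall>f. set_pmf (P f) \<subseteq> \<Omega>"
  defines "q \<equiv> measure_pmf.expectation J (\<lambda>(t, f). measure_pmf.prob (P f) t)"
  shows "q \<le> (mutual_info J + kl_div (marg_T J) (pmf_of_set (tau \<Omega> k)) + 1) / info_Omega \<Omega> k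
       \<and> q \<le> (log 2 (real (card \<Omega> choose k)) - cond_entropy J + 1) / info_Omega \<Omega> k"
proof -
  define S where "S = set_pmf J"
  define JF where "JF = marg_F J"
  define JT where "JT = marg_T J"
  define n where "n = card \<Omega>"
  define a where "a = real n / real k"
  define C where "C = real (n choose k)"
  define L where "L = info_Omega \<Omega> k"
  define s where "s = (\<lambda>x. measure_pmf.prob (P (snd x)) (fst x))"
  define H where "H = cond_entropy J"
  have finS: "finite S"
    using assms(5) finite_tau[OF assms(1)] fin_B[OF assms(4)] unfolding S_def
    by (meson finite_SigmaI finite_subset)
  have a1: "a > 1" using assms(2,3) unfolding a_def n_def by (simp add: field_simps)
  have L: "L = log 2 a" unfolding L_def info_Omega_def a_def n_def
    using assms(2,3) by (simp add: log_divide)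
  have Lpos: "L > 0" using a1 L by simp
  have Cpos: "C > 0" using assms(3) unfolding C_def n_def by simp
  have setJF: "set_pmf JF = snd ` S" unfolding JF_def marg_F_def S_def by simp
  have setJT: "set_pmf JT = fst ` S" unfolding JT_def marg_T_def S_def by simp
  have q: "q = (\<Sum>x\<in>S. pmf J x * s x)"
    unfolding q_def S_def s_def
    by (subst integral_measure_pmf_real[OF finS[unfolded S_def]])
       (auto simp: mult.commute set_pmf_iff split_def)
  have H: "H = - (\<Sum>x\<in>S. pmf J x * log 2 (pmf J x / pmf JF (snd x)))"
    unfolding H_def cond_entropy_def S_def JF_def by (simp add: split_def)
  have sumJ: "(\<Sum>x\<in>S. pmf J x) = 1" unfolding S_def
    by (rule sum_pmf_eq_1) (use finS S_def in auto)
  have pterm: "pmf J x * (s x * L - log 2 (pmf J x / pmf JF (snd x))) - pmf J x * log 2 (2 * C)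
      \<le> (pmf JF (snd x) * a powr s x / (2 * C) - pmf J x) / ln 2" if x: "x \<in> S" for x
  proof -
    define u where "u = pmf J x"
    define v where "v = pmf JF (snd x)"
    define w where "w = a powr s x"
    have u: "u > 0" using x unfolding u_def S_def by (simp add: pmf_positive)
    have v: "v > 0" using x setJF unfolding v_def by (simp add: pmf_positive)
    have w: "w > 0" using a1 unfolding w_def by simp
    define y where "y = v * w / (2 * C * u)"
    have y: "y > 0" using u v w Cpos unfolding y_def by simp
    have lw: "log 2 w = s x * L" unfolding w_def L log_def using a1 by (simp add: ln_powr)
    have ly: "log 2 y = log 2 v + log 2 w - log 2 (2 * C) - log 2 u"
      unfolding y_def using u v w Cpos by (simp add: log_divide log_mult)
    have eq: "s x * L - log 2 (u / v) - log 2 (2 * C) = log 2 y"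
      using ly lw u v by (simp add: log_divide)
    have "u * (s x * L - log 2 (u / v)) - u * log 2 (2 * C) = u * (s x * L - log 2 (u / v) - log 2 (2 * C))"
      by (simp add: algebra_simps)
    also have "\<dots> = u * log 2 y" using eq by simp
    also have "\<dots> \<le> u * ((y - 1) / ln 2)"
      using log2_le[OF y] u by (intro mult_left_mono) auto
    also have "\<dots> = (v * w / (2 * C) - u) / ln 2"
      unfolding y_def using u Cpos by (simp add: field_simps)
    finally show ?thesis unfolding u_def v_def w_def .
  qed
  have sumr: "(\<Sum>x\<in>S. pmf JF (snd x) * a powr s x) \<le> 2 * C"
  proof -
    let ?F = "snd ` S"
    have finF: "finite ?F" using finS by simp
    have fint: "finite (tau \<Omega> k)" using finite_tau[OF assms(1)] .
    have "(\<Sum>x\<in>S. pmf JF (snd x) * a powr s x) \<le> (\<Sum>x\<in>tau \<Omega> k \<times> ?F. pmf JF (snd x) * a powr s x)"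
      using assms(5) finF fint unfolding S_def
      by (intro sum_mono2) (auto simp: S_def image_iff, force)
    also have "\<dots> = (\<Sum>t\<in>tau \<Omega> k. \<Sum>f\<in>?F. pmf JF f * a powr measure_pmf.prob (P f) t)"
      unfolding s_def by (simp add: sum.cartesian_product split_def)
    also have "\<dots> = (\<Sum>f\<in>?F. pmf JF f * (\<Sum>t\<in>tau \<Omega> k. a powr measure_pmf.prob (P f) t))"
      by (subst sum.swap) (simp add: sum_distrib_left)
    also have "\<dots> \<le> (\<Sum>f\<in>?F. pmf JF f * (2 * C))"
      using sum_powr_tau[OF assms(1-3)] assms(6) unfolding a_def C_def n_def
      by (intro sum_mono mult_left_mono) auto
    also have "\<dots> = 2 * C * (\<Sum>f\<in>?F. pmf JF f)" by (simp add: sum_distrib_left mult.commute)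
    also have "(\<Sum>f\<in>?F. pmf JF f) = 1" using sum_pmf_eq_1[OF finF, of JF] setJF by simp
    finally show ?thesis by simp
  qed
  have key: "q * L + H - log 2 (2 * C) \<le> 0"
  proof -
    have "q * L + H - log 2 (2 * C)
      = (\<Sum>x\<in>S. pmf J x * (s x * L - log 2 (pmf J x / pmf JF (snd x))) - pmf J x * log 2 (2 * C))"
    proof -
      have c: "(\<Sum>x\<in>S. pmf J x * log 2 (2 * C)) = log 2 (2 * C)"
        using sumJ by (simp add: sum_distrib_right[symmetric])
      have d: "(\<Sum>x\<in>S. pmf J x * (s x * L - log 2 (pmf J x / pmf JF (snd x))))
          = q * L + H"
        unfolding q H by (simp add: sum_subtractf sum_distrib_right right_diff_distrib mult.assoc)
      show ?thesis using c d by (simp add: sum_subtractf)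
    qed
    also have "\<dots> \<le> (\<Sum>x\<in>S. (pmf JF (snd x) * a powr s x / (2 * C) - pmf J x) / ln 2)"
      by (intro sum_mono pterm)
    also have "\<dots> = ((\<Sum>x\<in>S. pmf JF (snd x) * a powr s x) / (2 * C) - 1) / ln 2"
      by (simp add: sum_divide_distrib[symmetric] sum_subtractf sumJ)
    also have "\<dots> \<le> 0"
      using sumr Cpos by (intro divide_nonpos_pos) (auto simp: field_simps)
    finally show ?thesis .
  qed
  have l2C: "log 2 (2 * C) = 1 + log 2 C" using Cpos by (simp add: log_mult)
  have second: "q \<le> (log 2 C - H + 1) / L"
    using key l2C Lpos by (simp add: pos_le_divide_eq algebra_simps)
  have tne: "tau \<Omega> k \<noteq> {}" using Cpos card_tau[OF assms(1), of k] unfolding C_def n_def by auto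
  have MI: "mutual_info J = - H - (\<Sum>x\<in>S. pmf J x * log 2 (pmf JT (fst x)))"
  proof -
    have "mutual_info J = (\<Sum>x\<in>S. pmf J x * log 2 (pmf J x / (pmf JT (fst x) * pmf JF (snd x))))"
      unfolding mutual_info_def S_def JT_def JF_def by (simp add: split_def)
    also have "\<dots> = (\<Sum>x\<in>S. pmf J x * log 2 (pmf J x / pmf JF (snd x)) - pmf J x * log 2 (pmf JT (fst x)))"
    proof (rule sum.cong[OF refl])
      fix x assume x: "x \<in> S"
      have u: "pmf J x > 0" using x unfolding S_def by (simp add: pmf_positive)
      have v: "pmf JF (snd x) > 0" using x setJF by (simp add: pmf_positive)
      have w: "pmf JT (fst x) > 0" using x setJT by (simp add: pmf_positive)
      show "pmf J x * log 2 (pmf J x / (pmf JT (fst x) * pmf JF (snd x))) =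
          pmf J x * log 2 (pmf J x / pmf JF (snd x)) - pmf J x * log 2 (pmf JT (fst x))"
        using u v w by (simp add: log_divide log_mult algebra_simps)
    qed
    also have "\<dots> = - H - (\<Sum>x\<in>S. pmf J x * log 2 (pmf JT (fst x)))"
      unfolding H by (simp add: sum_subtractf)
    finally show ?thesis .
  qed
  have KL: "kl_div JT (pmf_of_set (tau \<Omega> k)) = (\<Sum>t\<in>set_pmf JT. pmf JT t * log 2 (pmf JT t)) + log 2 C"
  proof -
    have "kl_div JT (pmf_of_set (tau \<Omega> k)) = (\<Sum>t\<in>set_pmf JT. pmf JT t * log 2 (pmf JT t) + pmf JT t * log 2 C)"
      unfolding kl_div_def
    proof (rule sum.cong[OF refl])
      fix t assume t: "t \<in> set_pmf JT"
      have tt: "t \<in> tau \<Omega> k" using t setJT assms(5) unfolding S_def by auto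
      have w: "pmf JT t > 0" using t by (simp add: pmf_positive)
      have "pmf (pmf_of_set (tau \<Omega> k)) t = 1 / C"
        using tt tne finite_tau[OF assms(1)] card_tau[OF assms(1)] unfolding C_def n_def by simp
      then show "pmf JT t * log 2 (pmf JT t / pmf (pmf_of_set (tau \<Omega> k)) t) =
          pmf JT t * log 2 (pmf JT t) + pmf JT t * log 2 C"
        using w Cpos by (simp add: log_mult algebra_simps)
    qed
    also have "\<dots> = (\<Sum>t\<in>set_pmf JT. pmf JT t * log 2 (pmf JT t)) + log 2 C * (\<Sum>t\<in>set_pmf JT. pmf JT t)"
      by (simp add: sum.distrib sum_distrib_right mult.commute)
    also have "(\<Sum>t\<in>set_pmf JT. pmf JT t) = 1"
      by (rule sum_pmf_eq_1) (use finS setJT in auto)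
    finally show ?thesis by simp
  qed
  have EF: "(\<Sum>x\<in>S. pmf J x * log 2 (pmf JT (fst x))) = (\<Sum>t\<in>set_pmf JT. pmf JT t * log 2 (pmf JT t))"
    using expect_fst[OF finS[unfolded S_def], of "\<lambda>t. log 2 (pmf JT t)"]
    unfolding S_def JT_def marg_T_def by simp
  have ident: "mutual_info J + kl_div JT (pmf_of_set (tau \<Omega> k)) = log 2 C - H"
    using MI KL EF by simp
  show ?thesis
    using second ident unfolding JT_def C_def n_def L_def H_def by simp
qed

end
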